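(* For all $A,B\in\mathbb{P}(n)$, if $A\preceq B$ then $A\preceq A*B\preceq B$.
   Context: $\mathbb{P}(n)$ denotes the cone of $n\times n$ positive definite Hermitian matrices and $\preceq$ is the Löwner order: $A\preceq B$ iff $B-A$ is positive semidefinite. For $A,B\in\mathbb{P}(n)$, with $\lambda_{\max},\lambda_{\min}$ the largest and smallest eigenvalues of $BA^{-1}$, define $A*B=\frac{1}{\sqrt{\lambda_{\min}}+\sqrt{\lambda_{\max}}}\left(B+\sqrt{\lambda_{\min}\lambda_{\max}}\,A\right)$. *)

theory Defs
  imports "Jordan_Normal_Form.Matrix" "Jordan_Normal_Form.Char_Poly"
          "Jordan_Normal_Form.Gauss_Jordan_Elimination"
begin

definition conj_transpose :: "complex mat \<Rightarrow> complex mat" where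
  "conj_transpose A = mat (dim_col A) (dim_row A) (\<lambda>(i,j). cnj (A $$ (j,i)))"

definition hermitian :: "nat \<Rightarrow> complex mat \<Rightarrow> bool" where
  "hermitian n A \<longleftrightarrow> A \<in> carrier_mat n n \<and> conj_transpose A = A"

definition qform :: "complex mat \<Rightarrow> complex vec \<Rightarrow> complex" where
  "qform A v = (\<Sum>i<dim_vec v. \<Sum>j<dim_vec v. cnj (v $ i) * A $$ (i,j) * v $ j)"

definition psd :: "nat \<Rightarrow> complex mat \<Rightarrow> bool" where
  "psd n A \<longleftrightarrow> hermitian n A \<and> (\<forall>v \<in> carrier_vec n. Re (qform A v) \<ge> 0)"

definition posdef :: "nat \<Rightarrow> complex mat \<Rightarrow> bool" where
  "posdef n A \<longleftrightarrow> hermitian n A \<and> (\<forall>v \<in> carrier_vec n. v \<noteq> 0\<^sub>v n \<longrightarrow> Re (qform A v) > 0)"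

definition loewner :: "nat \<Rightarrow> complex mat \<Rightarrow> complex mat \<Rightarrow> bool" where
  "loewner n A B \<longleftrightarrow> psd n (B - A)"

definition mat_inv :: "complex mat \<Rightarrow> complex mat" where
  "mat_inv A = the (mat_inverse A)"

(* largest / smallest eigenvalue of a matrix whose eigenvalues are all real *)
definition lam_max :: "complex mat \<Rightarrow> real" where
  "lam_max M = Max {x::real. eigenvalue M (complex_of_real x)}"

definition lam_min :: "complex mat \<Rightarrow> real" where
  "lam_min M = Min {x::real. eigenvalue M (complex_of_real x)}"

definition star_op :: "complex mat \<Rightarrow> complex mat \<Rightarrow> complex mat" where
  "star_op A B =
     (let M = B * mat_inv A; lmin = lam_min M; lmax = lam_max M in
      complex_of_real (1 / (sqrt lmin + sqrt lmax)) \<cdot>\<^sub>m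
        (B + complex_of_real (sqrt (lmin * lmax)) \<cdot>\<^sub>m A))"

end

theory Submission
  imports Defs
begin

lemma herm_iff: "hermitian n X \<longleftrightarrow> X \<in> carrier_mat n n \<and> (\<forall>i<n. \<forall>j<n. X $$ (j,i) = cnj (X $$ (i,j)))"
proof
  assume h: "hermitian n X"
  hence c: "X \<in> carrier_mat n n" and e: "conj_transpose X = X" by (auto simp: hermitian_def)
  show "X \<in> carrier_mat n n \<and> (\<forall>i<n. \<forall>j<n. X $$ (j,i) = cnj (X $$ (i,j)))"
  proof (intro conjI c allI impI)
    fix i j assume "i < n" "j < n"
    hence "conj_transpose X $$ (j,i) = cnj (X $$ (i,j))" using c by (auto simp: conj_transpose_def)
    thus "X $$ (j,i) = cnj (X $$ (i,j))" using e by simp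
  qed
next
  assume h: "X \<in> carrier_mat n n \<and> (\<forall>i<n. \<forall>j<n. X $$ (j,i) = cnj (X $$ (i,j)))"
  have c: "X \<in> carrier_mat n n" using h by simp
  have e: "\<And>i j. i < n \<Longrightarrow> j < n \<Longrightarrow> X $$ (j,i) = cnj (X $$ (i,j))" using h by blast
  show "hermitian n X" unfolding hermitian_def
  proof (intro conjI c)
    show "conj_transpose X = X"
    proof (rule eq_matI)
      fix i j assume "i < dim_row X" "j < dim_col X"
      hence ij: "i < n" "j < n" using c by auto
      have "conj_transpose X $$ (i, j) = cnj (X $$ (j, i))" using ij c by (simp add: conj_transpose_def)
      also have "\<dots> = X $$ (i, j)" using e[OF ij(2) ij(1)] by simp
      finally show "conj_transpose X $$ (i, j) = X $$ (i, j)" .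
    qed (use c in \<open>simp_all add: conj_transpose_def\<close>)
  qed
qed

definition sesq :: "nat \<Rightarrow> complex mat \<Rightarrow> complex vec \<Rightarrow> complex vec \<Rightarrow> complex" where
  "sesq n X w v = (\<Sum>i<n. \<Sum>j<n. cnj (w$i) * X$$(i,j) * v$j)"

definition nsq :: "complex vec \<Rightarrow> real" where
  "nsq v = (\<Sum>i<dim_vec v. (cmod (v$i))^2)"

lemma qform_sesq: "v \<in> carrier_vec n \<Longrightarrow> qform X v = sesq n X v v"
  by (simp add: qform_def sesq_def)

lemma sesq_mv: assumes "X \<in> carrier_mat n n" "v \<in> carrier_vec n"
  shows "sesq n X w v = (\<Sum>i<n. cnj (w$i) * (X *\<^sub>v v)$i)"
  unfolding sesq_def
proof (rule sum.cong[OF refl])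
  fix i assume "i \<in> {..<n}"
  thus "(\<Sum>j<n. cnj (w $ i) * X $$ (i, j) * v $ j) = cnj (w $ i) * (X *\<^sub>v v) $ i"
    using assms by (auto simp: scalar_prod_def sum_distrib_left atLeast0LessThan mult.assoc intro!: sum.cong)
qed

lemma sesq_herm: assumes "\<forall>i<n. \<forall>j<n. X $$ (j,i) = cnj (X $$ (i,j))"
  shows "sesq n X v w = cnj (sesq n X w v)"
proof -
  have "cnj (sesq n X w v) = (\<Sum>i<n. \<Sum>j<n. cnj (v$j) * X$$(j,i) * w$i)"
    unfolding sesq_def cnj_sum
  proof (intro sum.cong refl)
    fix i j assume "i \<in> {..<n}" "j \<in> {..<n}"
    hence "X $$ (j,i) = cnj (X $$ (i,j))" using assms by blast
    thus "cnj (cnj (w $ i) * X $$ (i, j) * v $ j) = cnj (v $ j) * X $$ (j, i) * w $ i"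
      by (simp add: mult.commute mult.left_commute)
  qed
  also have "\<dots> = sesq n X v w" unfolding sesq_def by (rule sum.swap)
  finally show ?thesis by simp
qed

lemma sesq_self_mv: assumes "X \<in> carrier_mat n n" "v \<in> carrier_vec n"
  shows "sesq n X (X *\<^sub>v v) v = complex_of_real (nsq (X *\<^sub>v v))"
proof -
  have d: "dim_vec (X *\<^sub>v v) = n" using assms by simp
  show ?thesis unfolding sesq_mv[OF assms] nsq_def of_real_sum d
    by (intro sum.cong refl) (metis complex_norm_square mult.commute)
qed

lemma sesq_expand: assumes "v \<in> carrier_vec n" "w \<in> carrier_vec n"
  shows "sesq n X (v - c \<cdot>\<^sub>v w) (v - c \<cdot>\<^sub>v w) = sesq n X v v - c * sesq n X v w - cnj c * sesq n X w v + cnj c * c * sesq n X w w"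
proof -
  have "sesq n X (v - c \<cdot>\<^sub>v w) (v - c \<cdot>\<^sub>v w) = (\<Sum>i<n. \<Sum>j<n. 
     (cnj (v$i) * X$$(i,j) * v$j - c * (cnj (v$i) * X$$(i,j) * w$j)) - (cnj c * (cnj (w$i) * X$$(i,j) * v$j) - cnj c * c * (cnj (w$i) * X$$(i,j) * w$j)))"
    unfolding sesq_def using assms
    apply (intro sum.cong refl)
    apply (simp add: lessThan_iff)
    apply (simp add: ring_distribs)
    done
  thus ?thesis unfolding sesq_def by (simp add: sum_subtractf sum_distrib_left)
qed

lemma comp_le_nsq: assumes "v \<in> carrier_vec n" "i < n"
  shows "(cmod (v$i))^2 \<le> nsq v"
  unfolding nsq_def using assms by (intro member_le_sum) auto

lemma nsq_nonneg: "0 \<le> nsq v" unfolding nsq_def by (intro sum_nonneg) auto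

lemma sesq_bound: assumes "X \<in> carrier_mat n n" "v \<in> carrier_vec n"
  shows "cmod (sesq n X v v) \<le> (\<Sum>i<n. \<Sum>j<n. cmod (X$$(i,j))) * nsq v"
proof -
  have "cmod (sesq n X v v) \<le> (\<Sum>i<n. cmod (\<Sum>j<n. cnj (v$i) * X$$(i,j) * v$j))"
    unfolding sesq_def by (rule norm_sum)
  also have "\<dots> \<le> (\<Sum>i<n. \<Sum>j<n. cmod (cnj (v$i) * X$$(i,j) * v$j))"
    by (intro sum_mono norm_sum)
  also have "\<dots> \<le> (\<Sum>i<n. \<Sum>j<n. cmod (X$$(i,j)) * nsq v)"
  proof (intro sum_mono)
    fix i j assume i: "i \<in> {..<n}" and j: "j \<in> {..<n}"
    have a: "(cmod (v$i))^2 \<le> nsq v" "(cmod (v$j))^2 \<le> nsq v" using i j assms comp_le_nsq by auto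
    have "2 * (cmod (v$i) * cmod (v$j)) \<le> (cmod (v$i))^2 + (cmod (v$j))^2"
      using sum_squares_bound[of "cmod (v$i)" "cmod (v$j)"] by (simp add: mult.assoc)
    hence b: "cmod (v$i) * cmod (v$j) \<le> nsq v" using a by linarith
    have "cmod (cnj (v$i) * X$$(i,j) * v$j) = cmod (X$$(i,j)) * (cmod (v$i) * cmod (v$j))"
      by (simp add: norm_mult)
    also have "\<dots> \<le> cmod (X$$(i,j)) * nsq v" by (intro mult_left_mono b) auto
    finally show "cmod (cnj (v$i) * X$$(i,j) * v$j) \<le> cmod (X$$(i,j)) * nsq v" .
  qed
  also have "\<dots> = (\<Sum>i<n. \<Sum>j<n. cmod (X$$(i,j))) * nsq v"
    by (simp add: sum_distrib_right)
  finally show ?thesis .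
qed

lemma mv_bound: assumes "D \<in> carrier_mat n n" "x \<in> carrier_vec n"
  shows "nsq (D *\<^sub>v x) \<le> (\<Sum>i<n. (\<Sum>j<n. cmod (D$$(i,j)))^2) * nsq x"
proof -
  have "nsq (D *\<^sub>v x) = (\<Sum>i<n. (cmod ((D *\<^sub>v x)$i))^2)" using assms by (simp add: nsq_def)
  also have "\<dots> \<le> (\<Sum>i<n. (\<Sum>j<n. cmod (D$$(i,j)))^2 * nsq x)"
  proof (intro sum_mono)
    fix i assume i: "i \<in> {..<n}"
    have "cmod ((D *\<^sub>v x)$i) = cmod (\<Sum>j<n. D$$(i,j) * x$j)"
      using i assms by (simp add: scalar_prod_def atLeast0LessThan)
    also have "\<dots> \<le> (\<Sum>j<n. cmod (D$$(i,j)) * cmod (x$j))"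
      by (rule order_trans[OF norm_sum]) (simp add: norm_mult)
    also have "\<dots> \<le> (\<Sum>j<n. cmod (D$$(i,j)) * sqrt (nsq x))"
    proof (intro sum_mono mult_left_mono)
      fix j assume "j \<in> {..<n}"
      hence "(cmod (x$j))^2 \<le> nsq x" using assms comp_le_nsq by auto
      thus "cmod (x$j) \<le> sqrt (nsq x)" by (simp add: real_le_rsqrt)
    qed auto
    also have "\<dots> = (\<Sum>j<n. cmod (D$$(i,j))) * sqrt (nsq x)" by (simp add: sum_distrib_right)
    finally have le: "cmod ((D *\<^sub>v x)$i) \<le> (\<Sum>j<n. cmod (D$$(i,j))) * sqrt (nsq x)" .
    have "(cmod ((D *\<^sub>v x)$i))^2 \<le> ((\<Sum>j<n. cmod (D$$(i,j))) * sqrt (nsq x))^2"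
      by (intro power_mono le) auto
    also have "\<dots> = (\<Sum>j<n. cmod (D$$(i,j)))^2 * nsq x"
      using nsq_nonneg by (simp add: power_mult_distrib)
    finally show "(cmod ((D *\<^sub>v x)$i))^2 \<le> (\<Sum>j<n. cmod (D$$(i,j)))^2 * nsq x" .
  qed
  also have "\<dots> = (\<Sum>i<n. (\<Sum>j<n. cmod (D$$(i,j)))^2) * nsq x" by (simp add: sum_distrib_right)
  finally show ?thesis .
qed

lemma inverse_exists: assumes C: "C \<in> carrier_mat n n"
  and inj: "\<forall>u\<in>carrier_vec n. C *\<^sub>v u = 0\<^sub>v n \<longrightarrow> u = 0\<^sub>v n"
  shows "mat_inverse C = Some (mat_inv C) \<and> C * mat_inv C = 1\<^sub>m n \<and> mat_inv C * C = 1\<^sub>m n \<and> mat_inv C \<in> carrier_mat n n"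
proof -
  have "det C \<noteq> 0" using det_0_iff_vec_prod_zero[OF C] inj by auto
  hence u: "C \<in> Units (ring_mat TYPE(complex) n n)" by (rule det_non_zero_imp_unit[OF C])
  have "mat_inverse C \<noteq> None"
  proof
    assume "mat_inverse C = None"
    from mat_inverse(1)[OF C this, where b=n] u show False by blast
  qed
  then obtain D where D: "mat_inverse C = Some D" by auto
  hence "mat_inv C = D" by (simp add: mat_inv_def)
  thus ?thesis using mat_inverse(2)[OF C D] D by auto
qed

lemma key_eps:
  assumes C: "C \<in> carrier_mat n n" and hC: "\<forall>i<n. \<forall>j<n. C$$(j,i) = cnj (C$$(i,j))"
  and psdC: "\<forall>v\<in>carrier_vec n. 0 \<le> Re (sesq n C v v)"
  and inj: "\<forall>u\<in>carrier_vec n. C *\<^sub>v u = 0\<^sub>v n \<longrightarrow> u = 0\<^sub>v n"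
  and A: "A \<in> carrier_mat n n"
  shows "\<exists>e>0. \<forall>v\<in>carrier_vec n. e * Re (sesq n A v v) \<le> Re (sesq n C v v)"
proof -
  define D where "D = mat_inv C"
  have D: "D \<in> carrier_mat n n" "D * C = 1\<^sub>m n" using inverse_exists[OF C inj] D_def by auto
  define K1 where "K1 = (\<Sum>i<n. \<Sum>j<n. cmod (C$$(i,j))) + 1"
  define K2 where "K2 = (\<Sum>i<n. (\<Sum>j<n. cmod (D$$(i,j)))^2) + 1"
  define K3 where "K3 = (\<Sum>i<n. \<Sum>j<n. cmod (A$$(i,j))) + 1"
  have "0 \<le> (\<Sum>i<n. \<Sum>j<n. cmod (C$$(i,j)))" by (intro sum_nonneg) auto
  hence K1: "K1 \<ge> 1" unfolding K1_def by linarith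
  have "0 \<le> (\<Sum>i<n. (\<Sum>j<n. cmod (D$$(i,j)))^2)" by (intro sum_nonneg) auto
  hence K2: "K2 \<ge> 1" unfolding K2_def by linarith
  have "0 \<le> (\<Sum>i<n. \<Sum>j<n. cmod (A$$(i,j)))" by (intro sum_nonneg) auto
  hence K3: "K3 \<ge> 1" unfolding K3_def by linarith
  show ?thesis
  proof (intro exI[of _ "1 / (K1 * K2 * K3)"] conjI ballI)
    show "0 < 1 / (K1 * K2 * K3)" using K1 K2 K3 by simp
    fix v :: "complex vec" assume v: "v \<in> carrier_vec n"
    define w where "w = C *\<^sub>v v"
    have w: "w \<in> carrier_vec n" using C v w_def by simp
    define N where "N = nsq w"
    have N0: "0 \<le> N" unfolding N_def by (rule nsq_nonneg)
    have a: "Re (sesq n C w w) \<le> K1 * N"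
    proof -
      have "Re (sesq n C w w) \<le> cmod (sesq n C w w)" by (rule complex_Re_le_cmod)
      also have "\<dots> \<le> (K1 - 1) * N" unfolding K1_def N_def using sesq_bound[OF C w] by simp
      also have "\<dots> \<le> K1 * N" using N0 by (simp add: algebra_simps)
      finally show ?thesis .
    qed
    have s1: "sesq n C w v = complex_of_real N" unfolding w_def N_def by (rule sesq_self_mv[OF C v])
    have s2: "sesq n C v w = complex_of_real N" using sesq_herm[OF hC, of v w] s1 by simp
    define c where "c = complex_of_real (1 / K1)"
    have "0 \<le> Re (sesq n C (v - c \<cdot>\<^sub>v w) (v - c \<cdot>\<^sub>v w))" using psdC v w by auto
    also have "\<dots> = Re (sesq n C v v) - 2 * N / K1 + (1/K1)^2 * Re (sesq n C w w)"
      unfolding sesq_expand[OF v w] s1 s2 c_def by (simp add: power2_eq_square)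
    finally have "0 \<le> Re (sesq n C v v) - 2 * N / K1 + (1/K1)^2 * Re (sesq n C w w)" .
    moreover have "(1/K1)^2 * Re (sesq n C w w) \<le> (1/K1)^2 * (K1 * N)"
      by (intro mult_left_mono a) auto
    moreover have "(1/K1)^2 * (K1 * N) = N / K1" using K1 by (simp add: power2_eq_square)
    ultimately have "N / K1 \<le> Re (sesq n C v v)" by linarith
    hence b: "N \<le> K1 * Re (sesq n C v v)" using K1 by (simp add: divide_le_eq mult.commute)
    have "v = D *\<^sub>v w" unfolding w_def using D C v by (simp add: assoc_mult_mat_vec[symmetric, of D n n C n v])
    hence "nsq v \<le> (K2 - 1) * N" unfolding K2_def N_def using mv_bound[OF D(1) w] by simp
    also have "(K2 - 1) * N \<le> K2 * N" using N0 by (simp add: algebra_simps)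
    finally have c: "nsq v \<le> K2 * N" .
    have "Re (sesq n A v v) \<le> cmod (sesq n A v v)" by (rule complex_Re_le_cmod)
    also have "\<dots> \<le> (K3 - 1) * nsq v" unfolding K3_def using sesq_bound[OF A v] by simp
    also have "\<dots> \<le> K3 * nsq v" using nsq_nonneg by (simp add: algebra_simps)
    also have "\<dots> \<le> K3 * (K2 * N)" by (intro mult_left_mono c) (use K3 in auto)
    also have "\<dots> \<le> K3 * (K2 * (K1 * Re (sesq n C v v)))"
      by (intro mult_left_mono b) (use K2 K3 in auto)
    finally have "Re (sesq n A v v) \<le> (K1 * K2 * K3) * Re (sesq n C v v)" by (simp add: ac_simps)
    hence "1 / (K1 * K2 * K3) * Re (sesq n A v v) \<le> 1 / (K1 * K2 * K3) * ((K1 * K2 * K3) * Re (sesq n C v v))"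
      by (intro mult_left_mono) (use K1 K2 K3 in auto)
    also have "\<dots> = Re (sesq n C v v)" using K1 K2 K3 by simp
    finally show "1 / (K1 * K2 * K3) * Re (sesq n A v v) \<le> Re (sesq n C v v)" .
  qed
qed


lemma sesq_add: assumes "X \<in> carrier_mat n n" "Y \<in> carrier_mat n n"
  shows "sesq n (X + Y) w v = sesq n X w v + sesq n Y w v"
proof -
  have "sesq n (X + Y) w v = (\<Sum>i<n. \<Sum>j<n. cnj (w$i) * X$$(i,j) * v$j + cnj (w$i) * Y$$(i,j) * v$j)"
    unfolding sesq_def using assms by (intro sum.cong refl) (simp add: algebra_simps)
  thus ?thesis unfolding sesq_def by (simp add: sum.distrib)
qed

lemma sesq_minus: assumes "X \<in> carrier_mat n n" "Y \<in> carrier_mat n n"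
  shows "sesq n (X - Y) w v = sesq n X w v - sesq n Y w v"
proof -
  have "sesq n (X - Y) w v = (\<Sum>i<n. \<Sum>j<n. cnj (w$i) * X$$(i,j) * v$j - cnj (w$i) * Y$$(i,j) * v$j)"
    unfolding sesq_def using assms by (intro sum.cong refl) (simp add: algebra_simps)
  thus ?thesis unfolding sesq_def by (simp add: sum_subtractf)
qed

lemma sesq_smult: assumes "X \<in> carrier_mat n n"
  shows "sesq n (c \<cdot>\<^sub>m X) w v = c * sesq n X w v"
proof -
  have "sesq n (c \<cdot>\<^sub>m X) w v = (\<Sum>i<n. \<Sum>j<n. c * (cnj (w$i) * X$$(i,j) * v$j))"
    unfolding sesq_def using assms by (intro sum.cong refl) (simp add: algebra_simps)
  thus ?thesis unfolding sesq_def by (simp add: sum_distrib_left)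
qed

lemma Re_real_mult: "Re (complex_of_real r * z) = r * Re z" by simp

lemma psd_sweep:
  assumes A: "A \<in> carrier_mat n n" and hA: "\<forall>i<n. \<forall>j<n. A$$(j,i) = cnj (A$$(i,j))"
  and B: "B \<in> carrier_mat n n" and hB: "\<forall>i<n. \<forall>j<n. B$$(j,i) = cnj (B$$(i,j))"
  and pA: "\<forall>v\<in>carrier_vec n. 0 \<le> Re (sesq n A v v)"
  and pB: "\<forall>v\<in>carrier_vec n. 0 \<le> Re (sesq n B v v)"
  and t: "0 \<le> t"
  and inj: "\<forall>s. 0 \<le> s \<longrightarrow> s \<le> t \<longrightarrow> (\<forall>u\<in>carrier_vec n. (B - complex_of_real s \<cdot>\<^sub>m A) *\<^sub>v u = 0\<^sub>v n \<longrightarrow> u = 0\<^sub>v n)"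
  shows "\<forall>v\<in>carrier_vec n. t * Re (sesq n A v v) \<le> Re (sesq n B v v)"
proof -
  define T where "T = {s. 0 \<le> s \<and> s \<le> t \<and> (\<forall>v\<in>carrier_vec n. s * Re (sesq n A v v) \<le> Re (sesq n B v v))}"
  have T0: "0 \<in> T" unfolding T_def using t pB by auto
  have bdd: "bdd_above T" unfolding T_def bdd_above_def by auto
  define m where "m = Sup T"
  have m0: "0 \<le> m" unfolding m_def by (rule cSup_upper[OF T0 bdd])
  have mt: "m \<le> t" unfolding m_def by (rule cSup_least) (use T0 T_def in auto)
  have mT: "m \<in> T"
  proof -
    have "m * Re (sesq n A v v) \<le> Re (sesq n B v v)" if v: "v \<in> carrier_vec n" for v
    proof (cases "Re (sesq n A v v) = 0")
      case True thus ?thesis using pB v by simp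
    next
      case False
      hence a: "0 < Re (sesq n A v v)" using pA v by (simp add: order_less_le)
      have "m \<le> Re (sesq n B v v) / Re (sesq n A v v)" unfolding m_def
      proof (rule cSup_least)
        show "T \<noteq> {}" using T0 by auto
        fix s assume "s \<in> T"
        hence "s * Re (sesq n A v v) \<le> Re (sesq n B v v)" unfolding T_def using v by auto
        thus "s \<le> Re (sesq n B v v) / Re (sesq n A v v)" using a by (simp add: le_divide_eq)
      qed
      thus ?thesis using a by (simp add: le_divide_eq)
    qed
    thus ?thesis unfolding T_def using m0 mt by auto
  qed
  have "m = t"
  proof (rule ccontr)
    assume "m \<noteq> t"
    hence mlt: "m < t" using mt by simp
    define C where "C = B - complex_of_real m \<cdot>\<^sub>m A"
    have C: "C \<in> carrier_mat n n" unfolding C_def using A B by (simp add: minus_carrier_mat)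
    have qC: "sesq n C w v = sesq n B w v - complex_of_real m * sesq n A w v" for w v
      unfolding C_def using A B by (simp add: sesq_minus sesq_smult)
    have hC: "\<forall>i<n. \<forall>j<n. C$$(j,i) = cnj (C$$(i,j))"
    proof (intro allI impI)
      fix i j assume ij: "i < n" "j < n"
      have "B$$(j,i) = cnj (B$$(i,j))" "A$$(j,i) = cnj (A$$(i,j))" using hA hB ij by blast+
      thus "C$$(j,i) = cnj (C$$(i,j))" unfolding C_def using A B ij by simp
    qed
    have pC: "\<forall>v\<in>carrier_vec n. 0 \<le> Re (sesq n C v v)"
      using mT unfolding T_def qC by auto
    have injC: "\<forall>u\<in>carrier_vec n. C *\<^sub>v u = 0\<^sub>v n \<longrightarrow> u = 0\<^sub>v n"
      using inj m0 mt unfolding C_def by auto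
    obtain e where e: "e > 0" and eC: "\<forall>v\<in>carrier_vec n. e * Re (sesq n A v v) \<le> Re (sesq n C v v)"
      using key_eps[OF C hC pC injC A] by blast
    define s where "s = min t (m + e)"
    have "s \<in> T" unfolding T_def
    proof (intro CollectI conjI ballI)
      show "0 \<le> s" using m0 e t unfolding s_def by simp
      show "s \<le> t" unfolding s_def by simp
      fix v :: "complex vec" assume v: "v \<in> carrier_vec n"
      have a: "0 \<le> Re (sesq n A v v)" using pA v by auto
      have "s * Re (sesq n A v v) \<le> (m + e) * Re (sesq n A v v)"
        by (intro mult_right_mono a) (simp add: s_def)
      also have "\<dots> = m * Re (sesq n A v v) + e * Re (sesq n A v v)" by (simp add: algebra_simps)
      also have "\<dots> \<le> m * Re (sesq n A v v) + Re (sesq n C v v)" using eC v by auto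
      also have "\<dots> = Re (sesq n B v v)" unfolding qC by simp
      finally show "s * Re (sesq n A v v) \<le> Re (sesq n B v v)" .
    qed
    hence "s \<le> m" unfolding m_def by (rule cSup_upper[OF _ bdd])
    moreover have "m < s" unfolding s_def using mlt e by simp
    ultimately show False by simp
  qed
  thus ?thesis using mT unfolding T_def by auto
qed


lemma mv_comb: fixes X Y :: "complex mat" assumes X: "X \<in> carrier_mat n n" and Y: "Y \<in> carrier_mat n n" and u: "u \<in> carrier_vec n"
  shows "(X - c \<cdot>\<^sub>m Y) *\<^sub>v u = X *\<^sub>v u - c \<cdot>\<^sub>v (Y *\<^sub>v u)"
proof (rule eq_vecI)
  fix i assume "i < dim_vec (X *\<^sub>v u - c \<cdot>\<^sub>v (Y *\<^sub>v u))"
  hence i: "i < n" using X Y by simp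
  have "((X - c \<cdot>\<^sub>m Y) *\<^sub>v u) $ i = (\<Sum>j\<in>{0..<n}. X$$(i,j) * u$j - c * (Y$$(i,j) * u$j))"
    using X Y u i by (simp add: scalar_prod_def minus_carrier_mat) (intro sum.cong refl, simp add: algebra_simps)
  also have "\<dots> = (X *\<^sub>v u - c \<cdot>\<^sub>v (Y *\<^sub>v u)) $ i"
    using X Y u i by (simp add: scalar_prod_def sum_subtractf sum_distrib_left)
  finally show "((X - c \<cdot>\<^sub>m Y) *\<^sub>v u) $ i = (X *\<^sub>v u - c \<cdot>\<^sub>v (Y *\<^sub>v u)) $ i" .
qed (use X Y in \<open>simp add: minus_carrier_mat\<close>)

lemma real_ineq:
  fixes a b x y :: real
  assumes a1: "1 \<le> a" and ab: "a \<le> b" and x0: "0 \<le> x" and xy: "x \<le> y" and axy: "a^2 * x \<le> y"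
  shows "x \<le> (y + a*b*x)/(a+b)" and "(y + a*b*x)/(a+b) \<le> y"
proof -
  have ab0: "0 < a + b" using a1 ab by simp
  have "0 \<le> (a-1)*(b-1)*x" using a1 ab x0 by simp
  hence "x * (a+b) \<le> y + a*b*x" using xy by (simp add: algebra_simps)
  thus "x \<le> (y + a*b*x)/(a+b)" using ab0 by (simp add: le_divide_eq)
  have "0 \<le> (a+b-1)*(y - a^2*x)" using a1 ab axy by simp
  moreover have "0 \<le> a*(a+b)*(a-1)*x" using a1 ab x0 by simp
  ultimately have "y + a*b*x \<le> y * (a+b)" by (simp add: algebra_simps power2_eq_square)
  thus "(y + a*b*x)/(a+b) \<le> y" using ab0 by (simp add: divide_le_eq)
qed

lemma psd_of: assumes "X \<in> carrier_mat n n" "\<forall>i<n. \<forall>j<n. X$$(j,i) = cnj (X$$(i,j))"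
  "\<forall>v\<in>carrier_vec n. 0 \<le> Re (sesq n X v v)"
  shows "psd n X"
  unfolding psd_def herm_iff
proof (intro conjI ballI)
  fix v :: "complex vec" assume "v \<in> carrier_vec n"
  thus "0 \<le> Re (qform X v)" using assms(3) qform_sesq by metis
qed (use assms in blast)+


lemma vec_eq_of_minus: fixes x y :: "complex vec"
  assumes x: "x \<in> carrier_vec n" and y: "y \<in> carrier_vec n" and e: "x - y = 0\<^sub>v n"
  shows "x = y"
proof (rule eq_vecI)
  fix i assume "i < dim_vec y"
  hence i: "i < n" using y by simp
  have "(x - y)$i = 0" using e i by simp
  thus "x$i = y$i" using i y by simp
qed (use x y in simp)

lemma sesq_zero_dim: "sesq 0 X w v = 0" by (simp add: sesq_def)

theorem proposition3:
  fixes n :: nat and A B :: "complex mat"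
  assumes "posdef n A" and "posdef n B" and "loewner n A B"
  shows "loewner n A (star_op A B) \<and> loewner n (star_op A B) B"
proof -
  have A: "A \<in> carrier_mat n n" and hA: "\<forall>i<n. \<forall>j<n. A$$(j,i) = cnj (A$$(i,j))"
    using assms(1) unfolding posdef_def herm_iff by blast+
  have B: "B \<in> carrier_mat n n" and hB: "\<forall>i<n. \<forall>j<n. B$$(j,i) = cnj (B$$(i,j))"
    using assms(2) unfolding posdef_def herm_iff by blast+
  have pdA: "\<And>v. v \<in> carrier_vec n \<Longrightarrow> v \<noteq> 0\<^sub>v n \<Longrightarrow> 0 < Re (sesq n A v v)"
    using assms(1) unfolding posdef_def by (metis qform_sesq)
  have pdB: "\<And>v. v \<in> carrier_vec n \<Longrightarrow> v \<noteq> 0\<^sub>v n \<Longrightarrow> 0 < Re (sesq n B v v)"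
    using assms(2) unfolding posdef_def by (metis qform_sesq)
  have z: "\<And>X. sesq n X (0\<^sub>v n) (0\<^sub>v n) = 0" by (simp add: sesq_def)
  have pA: "\<forall>v\<in>carrier_vec n. 0 \<le> Re (sesq n A v v)"
    using pdA z by (metis order_less_imp_le order_refl zero_complex.simps(1))
  have pB: "\<forall>v\<in>carrier_vec n. 0 \<le> Re (sesq n B v v)"
    using pdB z by (metis order_less_imp_le order_refl zero_complex.simps(1))
  have BA: "\<And>v. v \<in> carrier_vec n \<Longrightarrow> Re (sesq n A v v) \<le> Re (sesq n B v v)"
  proof -
    fix v :: "complex vec" assume v: "v \<in> carrier_vec n"
    have "0 \<le> Re (qform (B - A) v)" using assms(3) v unfolding loewner_def psd_def by blast
    thus "Re (sesq n A v v) \<le> Re (sesq n B v v)" using v A B by (simp add: qform_sesq sesq_minus)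
  qed
  define M where "M = B * mat_inv A"
  define S where "S = {x::real. eigenvalue M (complex_of_real x)}"
  define lmin where "lmin = lam_min M"
  define lmax where "lmax = lam_max M"
  define a where "a = sqrt lmin"
  define b where "b = sqrt lmax"
  define St where "St = star_op A B"
  have St_def': "St = complex_of_real (1 / (a + b)) \<cdot>\<^sub>m (B + complex_of_real (sqrt (lmin * lmax)) \<cdot>\<^sub>m A)"
    unfolding St_def star_op_def Let_def M_def lmin_def lmax_def a_def b_def by simp
  define c where "c = 1 / (a + b)"
  define d where "d = sqrt (lmin * lmax)"
  have St_eq: "St = complex_of_real c \<cdot>\<^sub>m (B + complex_of_real d \<cdot>\<^sub>m A)"
    unfolding St_def' c_def d_def ..
  have St: "St \<in> carrier_mat n n" unfolding St_eq using A B by simp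
  have hSt: "\<forall>i<n. \<forall>j<n. St$$(j,i) = cnj (St$$(i,j))"
  proof (intro allI impI)
    fix i j assume ij: "i < n" "j < n"
    have "B$$(j,i) = cnj (B$$(i,j))" "A$$(j,i) = cnj (A$$(i,j))" using hA hB ij by blast+
    thus "St$$(j,i) = cnj (St$$(i,j))" unfolding St_eq using A B ij by simp
  qed
  have qSt: "\<And>v. Re (sesq n St v v) = c * (Re (sesq n B v v) + d * Re (sesq n A v v))"
    unfolding St_eq using A B by (simp add: sesq_smult sesq_add)
  have hStA: "\<forall>i<n. \<forall>j<n. (St - A)$$(j,i) = cnj ((St - A)$$(i,j))"
  proof (intro allI impI)
    fix i j assume ij: "i < n" "j < n"
    have "St$$(j,i) = cnj (St$$(i,j))" "A$$(j,i) = cnj (A$$(i,j))" using hA hSt ij by blast+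
    thus "(St - A)$$(j,i) = cnj ((St - A)$$(i,j))" using A St ij by simp
  qed
  have hBSt: "\<forall>i<n. \<forall>j<n. (B - St)$$(j,i) = cnj ((B - St)$$(i,j))"
  proof (intro allI impI)
    fix i j assume ij: "i < n" "j < n"
    have "St$$(j,i) = cnj (St$$(i,j))" "B$$(j,i) = cnj (B$$(i,j))" using hB hSt ij by blast+
    thus "(B - St)$$(j,i) = cnj ((B - St)$$(i,j))" using B St ij by simp
  qed
  have CStA: "St - A \<in> carrier_mat n n" using A by (simp add: minus_carrier_mat)
  have CBSt: "B - St \<in> carrier_mat n n" using St by (simp add: minus_carrier_mat)
  show ?thesis
  proof (cases "n = 0")
    case True
    show ?thesis unfolding loewner_def St_def[symmetric]
      by (intro conjI psd_of CStA CBSt hStA hBSt) (simp_all add: True sesq_zero_dim)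
  next
    case False
    hence n0: "0 < n" by simp
    have injA: "\<forall>u\<in>carrier_vec n. A *\<^sub>v u = 0\<^sub>v n \<longrightarrow> u = 0\<^sub>v n"
    proof (intro ballI impI)
      fix u :: "complex vec" assume u: "u \<in> carrier_vec n" and Au: "A *\<^sub>v u = 0\<^sub>v n"
      have "sesq n A u u = 0" unfolding sesq_mv[OF A u] Au by simp
      show "u = 0\<^sub>v n"
      proof (rule ccontr)
        assume "u \<noteq> 0\<^sub>v n"
        from pdA[OF u this] \<open>sesq n A u u = 0\<close> show False by simp
      qed
    qed
    define Ai where "Ai = mat_inv A"
    have Ai: "Ai \<in> carrier_mat n n" "A * Ai = 1\<^sub>m n" "Ai * A = 1\<^sub>m n"
      using inverse_exists[OF A injA] unfolding Ai_def by auto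
    have M: "M \<in> carrier_mat n n" unfolding M_def Ai_def[symmetric] using B Ai by simp
    have finS: "finite S"
    proof -
      have cp: "char_poly M \<noteq> 0" using degree_monic_char_poly[OF M] by auto
      have "S \<subseteq> Re ` {z. poly (char_poly M) z = 0}"
      proof
        fix x assume "x \<in> S"
        hence "poly (char_poly M) (complex_of_real x) = 0"
          unfolding S_def using eigenvalue_root_char_poly[OF M] by auto
        thus "x \<in> Re ` {z. poly (char_poly M) z = 0}" by (intro image_eqI[of _ _ "complex_of_real x"]) auto
      qed
      thus ?thesis using poly_roots_finite[OF cp] finite_subset by blast
    qed
    have MAu: "M *\<^sub>v (A *\<^sub>v u) = B *\<^sub>v u" if u: "u \<in> carrier_vec n" for u
    proof -
      have "M *\<^sub>v (A *\<^sub>v u) = B *\<^sub>v (Ai *\<^sub>v (A *\<^sub>v u))"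
        unfolding M_def Ai_def[symmetric] using B Ai A u by (simp add: assoc_mult_mat_vec)
      also have "Ai *\<^sub>v (A *\<^sub>v u) = u" using Ai A u by (simp add: assoc_mult_mat_vec[symmetric])
      finally show ?thesis .
    qed
    have S1: "1 \<le> x" if xS: "x \<in> S" for x
    proof -
      obtain w where w: "w \<in> carrier_vec n" "w \<noteq> 0\<^sub>v n" "M *\<^sub>v w = complex_of_real x \<cdot>\<^sub>v w"
        using xS M unfolding S_def eigenvalue_def eigenvector_def by auto
      define u where "u = Ai *\<^sub>v w"
      have u: "u \<in> carrier_vec n" unfolding u_def using Ai w by simp
      have Au: "A *\<^sub>v u = w" unfolding u_def using Ai A w by (simp add: assoc_mult_mat_vec[symmetric])
      have u0: "u \<noteq> 0\<^sub>v n" using Au w A by auto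
      have Bu: "B *\<^sub>v u = complex_of_real x \<cdot>\<^sub>v (A *\<^sub>v u)" using MAu[OF u] Au w by simp
      have "sesq n B u u = complex_of_real x * sesq n A u u"
        unfolding sesq_mv[OF B u] sesq_mv[OF A u] Bu sum_distrib_left using A u
        by (intro sum.cong refl) simp
      hence e: "Re (sesq n B u u) = x * Re (sesq n A u u)" by simp
      have "0 < Re (sesq n A u u)" by (rule pdA[OF u u0])
      moreover have "Re (sesq n A u u) \<le> x * Re (sesq n A u u)" using BA[OF u] e by simp
      ultimately show "1 \<le> x" by simp
    qed
    have injS: "\<forall>u\<in>carrier_vec n. (B - complex_of_real s \<cdot>\<^sub>m A) *\<^sub>v u = 0\<^sub>v n \<longrightarrow> u = 0\<^sub>v n"
      if sS: "s \<notin> S" for s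
    proof (intro ballI impI)
      fix u :: "complex vec" assume u: "u \<in> carrier_vec n" and eq: "(B - complex_of_real s \<cdot>\<^sub>m A) *\<^sub>v u = 0\<^sub>v n"
      have "B *\<^sub>v u - complex_of_real s \<cdot>\<^sub>v (A *\<^sub>v u) = 0\<^sub>v n"
        using eq unfolding mv_comb[OF B A u] .
      moreover have "B *\<^sub>v u \<in> carrier_vec n" using B u by simp
      moreover have "complex_of_real s \<cdot>\<^sub>v (A *\<^sub>v u) \<in> carrier_vec n" using A u by simp
      ultimately have Bu: "B *\<^sub>v u = complex_of_real s \<cdot>\<^sub>v (A *\<^sub>v u)"
        using vec_eq_of_minus by blast
      show "u = 0\<^sub>v n"
      proof (rule ccontr)
        assume u0: "u \<noteq> 0\<^sub>v n"
        have w0: "A *\<^sub>v u \<noteq> 0\<^sub>v n" using injA u u0 by blast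
        have "eigenvector M (A *\<^sub>v u) (complex_of_real s)"
          unfolding eigenvector_def
        proof (intro conjI)
          show "A *\<^sub>v u \<in> carrier_vec (dim_row M)" using M A u by simp
          show "A *\<^sub>v u \<noteq> 0\<^sub>v (dim_row M)" using M w0 by simp
          show "M *\<^sub>v (A *\<^sub>v u) = complex_of_real s \<cdot>\<^sub>v (A *\<^sub>v u)" using MAu[OF u] Bu by simp
        qed
        hence "s \<in> S" unfolding S_def eigenvalue_def by blast
        thus False using sS by simp
      qed
    qed
    have sweep: "\<forall>v\<in>carrier_vec n. t * Re (sesq n A v v) \<le> Re (sesq n B v v)"
      if t0: "0 \<le> t" and tS: "\<forall>s. 0 \<le> s \<longrightarrow> s \<le> t \<longrightarrow> s \<notin> S" for t
      by (rule psd_sweep[OF A hA B hB pA pB t0]) (use tS injS in blast)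
    have Sne: "S \<noteq> {}"
    proof
      assume Se: "S = {}"
      define e :: "complex vec" where "e = unit_vec n 0"
      have e: "e \<in> carrier_vec n" "e \<noteq> 0\<^sub>v n" unfolding e_def using n0 by auto
      define t where "t = Re (sesq n B e e) / Re (sesq n A e e) + 1"
      have a: "0 < Re (sesq n A e e)" by (rule pdA[OF e])
      have b: "0 < Re (sesq n B e e)" by (rule pdB[OF e])
      have t0: "0 \<le> t" unfolding t_def using a b by simp
      have "t * Re (sesq n A e e) \<le> Re (sesq n B e e)" using sweep[OF t0] Se e by simp
      moreover have "t * Re (sesq n A e e) = Re (sesq n B e e) + Re (sesq n A e e)"
        unfolding t_def using a by (simp add: field_simps)
      ultimately show False using a by simp
    qed
    have lmin: "lmin = Min S" unfolding lmin_def lam_min_def S_def ..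
    have lmax: "lmax = Max S" unfolding lmax_def lam_max_def S_def ..
    have lminS: "lmin \<in> S" unfolding lmin using finS Sne by simp
    have lmin1: "1 \<le> lmin" using S1[OF lminS] .
    have lminmax: "lmin \<le> lmax" unfolding lmax using finS lminS by simp
    have Bge: "lmin * Re (sesq n A v v) \<le> Re (sesq n B v v)" if v: "v \<in> carrier_vec n" for v
    proof -
      have tle: "t * Re (sesq n A v v) \<le> Re (sesq n B v v)" if "0 \<le> t" "t < lmin" for t
      proof -
        have "\<forall>s. 0 \<le> s \<longrightarrow> s \<le> t \<longrightarrow> s \<notin> S"
        proof (intro allI impI)
          fix s assume "0 \<le> s" "s \<le> t"
          hence "s < Min S" using that lmin by simp
          thus "s \<notin> S" using finS Min_le by force
        qed
        thus ?thesis using sweep[OF that(1)] v by blast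
      qed
      have a: "0 \<le> Re (sesq n A v v)" using pA v by blast
      have b: "0 \<le> Re (sesq n B v v)" using pB v by blast
      show ?thesis
      proof (rule ccontr)
        assume "\<not> ?thesis"
        hence lt: "Re (sesq n B v v) < lmin * Re (sesq n A v v)" by simp
        hence a': "0 < Re (sesq n A v v)" using a b by (metis mult_zero_right not_less order_le_less)
        define r where "r = Re (sesq n B v v) / Re (sesq n A v v)"
        have r0: "0 \<le> r" unfolding r_def using a' b by simp
        have rl: "r < lmin" unfolding r_def using lt a' by (simp add: divide_less_eq)
        define t where "t = (r + lmin) / 2"
        have "t * Re (sesq n A v v) \<le> Re (sesq n B v v)" by (rule tle) (use r0 rl lmin1 in \<open>simp_all add: t_def\<close>)
        hence "t \<le> r" unfolding r_def using a' by (simp add: le_divide_eq)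
        thus False using rl unfolding t_def by simp
      qed
    qed
    have a1: "1 \<le> a" unfolding a_def using lmin1 by simp
    have ab: "a \<le> b" unfolding a_def b_def using lminmax by simp
    have d: "d = a * b" unfolding d_def a_def b_def by (simp add: real_sqrt_mult)
    have c: "c = 1 / (a + b)" by (simp add: c_def)
    have ineqs: "Re (sesq n A v v) \<le> Re (sesq n St v v) \<and> Re (sesq n St v v) \<le> Re (sesq n B v v)"
      if v: "v \<in> carrier_vec n" for v
    proof -
      have "a^2 = lmin" unfolding a_def using lmin1 by simp
      hence "a^2 * Re (sesq n A v v) \<le> Re (sesq n B v v)" using Bge[OF v] by simp
      note r = real_ineq[OF a1 ab _ BA[OF v] this]
      have e: "Re (sesq n St v v) = (Re (sesq n B v v) + a * b * Re (sesq n A v v)) / (a + b)"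
        unfolding qSt c d by simp
      show ?thesis unfolding e using r pA v by blast
    qed
    show ?thesis unfolding loewner_def St_def[symmetric]
    proof (intro conjI psd_of CStA CBSt hStA hBSt ballI)
      fix v :: "complex vec" assume v: "v \<in> carrier_vec n"
      show "0 \<le> Re (sesq n (St - A) v v)" using ineqs[OF v] St A by (simp add: sesq_minus)
      show "0 \<le> Re (sesq n (B - St) v v)" using ineqs[OF v] St B by (simp add: sesq_minus)
    qed
  qed
qed

end
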